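(* Let $X$ be a set and let $T_1,T_2:\mathcal P(X)\to\mathcal P(X)$ be order reversing quasi involutions with $T_1(\mathcal P(X))=T_2(\mathcal P(X))=:\mathcal C_0$ and $T_1|_{\mathcal C_0}=T_2|_{\mathcal C_0}$. Then $T_1=T_2$.
   Context: $\mathcal P(X)$ denotes the power set of $X$. A map $T:\mathcal P(X)\to\mathcal P(X)$ is an order reversing quasi involution if for all $K,L\subseteq X$: (i) $K\subseteq TTK$, and (ii) $L\subseteq K$ implies $TK\subseteq TL$. *)

theory Defs
  imports Main
begin

definition order_reversing_quasi_involution :: "('a set \<Rightarrow> 'a set) \<Rightarrow> bool" where
  "order_reversing_quasi_involution T \<longleftrightarrow>
     (\<forall>K. K \<subseteq> T (T K)) \<and> (\<forall>K L. L \<subseteq> K \<longrightarrow> T K \<subseteq> T L)"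

end

theory Submission
  imports Defs
begin

lemma triple:
  assumes "order_reversing_quasi_involution T"
  shows "T (T (T K)) = T K"
proof -
  have a: "\<And>K. K \<subseteq> T (T K)" and m: "\<And>K L. L \<subseteq> K \<Longrightarrow> T K \<subseteq> T L"
    using assms unfolding order_reversing_quasi_involution_def by auto
  have "T (T (T K)) \<subseteq> T K" using m[OF a[of K]] .
  moreover have "T K \<subseteq> T (T (T K))" using a[of "T K"] .
  ultimately show ?thesis by (rule subset_antisym)
qed

lemma closure_least:
  assumes "order_reversing_quasi_involution T" "K \<subseteq> C" "C \<in> range T"
  shows "T (T K) \<subseteq> C"
proof -
  obtain L where C: "C = T L" using assms(3) by blast
  have "T (T K) \<subseteq> T (T C)" 
  proof -
    have "T K \<supseteq> T C" using assms(1,2) unfolding order_reversing_quasi_involution_def by simp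
    then show ?thesis using assms(1) unfolding order_reversing_quasi_involution_def by simp
  qed
  also have "\<dots> = C" using triple[OF assms(1)] C by simp
  finally show ?thesis .
qed

theorem proposition8p1:
  fixes T1 T2 :: "'a set \<Rightarrow> 'a set"
  assumes "order_reversing_quasi_involution T1"
    and "order_reversing_quasi_involution T2"
    and "range T1 = range T2"
    and "\<And>C. C \<in> range T1 \<Longrightarrow> T1 C = T2 C"
  shows "T1 = T2"
proof
  fix K
  have k1: "K \<subseteq> T1 (T1 K)" and k2: "K \<subseteq> T2 (T2 K)"
    using assms(1,2) unfolding order_reversing_quasi_involution_def by auto
  have r1: "T1 (T1 K) \<in> range T2" unfolding assms(3)[symmetric] by (rule rangeI)
  have r2: "T2 (T2 K) \<in> range T1" unfolding assms(3) by (rule rangeI)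
  have eq: "T1 (T1 K) = T2 (T2 K)"
    using closure_least[OF assms(1) k2 r2] closure_least[OF assms(2) k1 r1] by (rule subset_antisym)
  have "T1 K = T1 (T1 (T1 K))" using triple[OF assms(1)] by simp
  also have "\<dots> = T2 (T1 (T1 K))" using assms(4)[of "T1 (T1 K)"] by simp
  also have "\<dots> = T2 K" using eq triple[OF assms(2)] by simp
  finally show "T1 K = T2 K" .
qed

end
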